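(* Let $\Omega$ and $\Omega'$ be two causal orders on the same finite set of events $E$, let $\underline{I}=(I_\omega)_{\omega\in E}$ be a family of non-empty finite sets, and let $\Theta=\mathrm{Hist}(\Omega,\underline{I})$, $\Theta'=\mathrm{Hist}(\Omega',\underline{I})$. Then the meet $\Theta\wedge\Theta'$ is tight if and only if for every $\omega\in E$ we have $\downarrow_\Omega\omega\subseteq\downarrow_{\Omega'}\omega$ or $\downarrow_{\Omega'}\omega\subseteq\downarrow_\Omega\omega$.
   Context: A causal order $\Omega$ on $E$ is a preorder (reflexive transitive relation) $\le_\Omega$ on $E$; $\downarrow_\Omega\omega=\{\xi\in E:\xi\le_\Omega\omega\}$. Partial functions on $\underline{I}$ are functions $f$ with $\mathrm{dom}(f)\subseteq E$ and $f(\omega)\in I_\omega$, ordered by restriction ($f\le g$ iff $\mathrm{dom}(f)\subseteq\mathrm{dom}(g)$ and $g|_{\mathrm{dom}(f)}=f$). $\mathrm{Hist}(\Omega,\underline{I})=\bigcup_{\xi\in E}\prod_{\omega\in\downarrow_\Omega\xi}I_\omega$ (all partial functions whose domain is $\downarrow_\Omega\xi$ for some $\xi$). Partial functions are compatible if they agree on common domain; a compatible set $\mathcal F$ has join $\bigvee\mathcal F$ (union of the functions). For a set $\Theta$ of partial functions, $\mathrm{Ext}(\Theta)=\{\bigvee\mathcal F:\emptyset\ne\mathcal F\subseteq\Theta\text{ compatible}\}$; for a set $W$, $\mathrm{Prime}(W)=\{w\in W:\text{for all compatible }\mathcal F\subseteq W,\ w=\bigvee\mathcal F\Rightarrow w\in\mathcal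 F\}$. The meet is $\Theta\wedge\Theta'=\mathrm{Prime}(\mathrm{Ext}(\Theta)\cup\mathrm{Ext}(\Theta'))$. For a space $\Theta$ and $h\in\mathrm{Ext}(\Theta)$, $\mathrm{tips}_\Theta(h)=\mathrm{dom}(h)\setminus\bigcup\{\mathrm{dom}(k):k\in\mathrm{Ext}(\Theta),k<h\}$. A space $\Theta$ is tight if for every $k\in\mathrm{Ext}(\Theta)$ and every $\omega\in\mathrm{dom}(k)$ there is a unique $h\in\Theta$ with $h\le k$ and $\omega\in\mathrm{tips}_\Theta(h)$. *)

theory Defs
  imports Main
begin

definition causal_order :: "'e set \<Rightarrow> 'e rel \<Rightarrow> bool" where
  "causal_order E R \<longleftrightarrow> R \<subseteq> E \<times> E \<and> refl_on E R \<and> trans R"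

definition down :: "'e set \<Rightarrow> 'e rel \<Rightarrow> 'e \<Rightarrow> 'e set" where
  "down E R w = {x \<in> E. (x, w) \<in> R}"

text \<open>Partial functions are maps ('e \<rightharpoonup> 'v); the order is restriction, i.e. map_le.\<close>
definition Hist :: "'e set \<Rightarrow> 'e rel \<Rightarrow> ('e \<Rightarrow> 'v set) \<Rightarrow> ('e \<rightharpoonup> 'v) set" where
  "Hist E R I = {f. \<exists>x\<in>E. dom f = down E R x \<and> (\<forall>w\<in>dom f. the (f w) \<in> I w)}"

definition compatible :: "('e \<rightharpoonup> 'v) set \<Rightarrow> bool" where
  "compatible F \<longleftrightarrow> (\<forall>f\<in>F. \<forall>g\<in>F. \<forall>x\<in>dom f \<inter> dom g. f x = g x)"

definition join :: "('e \<rightharpoonup> 'v) set \<Rightarrow> ('e \<rightharpoonup> 'v)" where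
  "join F x = (if \<exists>f\<in>F. x \<in> dom f then (SOME f. f \<in> F \<and> x \<in> dom f) x else None)"

definition Ext :: "('e \<rightharpoonup> 'v) set \<Rightarrow> ('e \<rightharpoonup> 'v) set" where
  "Ext T = {join F | F. F \<noteq> {} \<and> F \<subseteq> T \<and> compatible F}"

definition Prime :: "('e \<rightharpoonup> 'v) set \<Rightarrow> ('e \<rightharpoonup> 'v) set" where
  "Prime W = {w \<in> W. \<forall>F. F \<subseteq> W \<and> compatible F \<and> w = join F \<longrightarrow> w \<in> F}"

definition meet :: "('e \<rightharpoonup> 'v) set \<Rightarrow> ('e \<rightharpoonup> 'v) set \<Rightarrow> ('e \<rightharpoonup> 'v) set" where
  "meet T T' = Prime (Ext T \<union> Ext T')"

definition tips :: "('e \<rightharpoonup> 'v) set \<Rightarrow> ('e \<rightharpoonup> 'v) \<Rightarrow> 'e set" where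
  "tips T h = dom h - \<Union>{dom k | k. k \<in> Ext T \<and> k \<subseteq>\<^sub>m h \<and> k \<noteq> h}"

definition tight :: "('e \<rightharpoonup> 'v) set \<Rightarrow> bool" where
  "tight T \<longleftrightarrow> (\<forall>k\<in>Ext T. \<forall>w\<in>dom k. \<exists>!h. h \<in> T \<and> h \<subseteq>\<^sub>m k \<and> w \<in> tips T h)"

end

theory Submission
  imports Defs
begin

lemma join_some:
  assumes h: "\<exists>f\<in>F. x \<in> dom f"
  shows "(SOME f. f \<in> F \<and> x \<in> dom f) \<in> F \<and> x \<in> dom (SOME f. f \<in> F \<and> x \<in> dom f)
    \<and> join F x = (SOME f. f \<in> F \<and> x \<in> dom f) x"
proof -
  have "\<exists>f. f \<in> F \<and> x \<in> dom f" using h by blast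
  hence "(SOME f. f \<in> F \<and> x \<in> dom f) \<in> F \<and> x \<in> dom (SOME f. f \<in> F \<and> x \<in> dom f)"
    by (rule someI_ex)
  moreover have "join F x = (SOME f. f \<in> F \<and> x \<in> dom f) x"
    unfolding join_def using h by (simp only: if_True)
  ultimately show ?thesis by blast
qed

lemma join_none: "\<not> (\<exists>f\<in>F. x \<in> dom f) \<Longrightarrow> join F x = None"
  unfolding join_def by (simp only: if_False)

lemma dom_join: "dom (join F) = \<Union>(dom ` F)"
proof -
  have "x \<in> dom (join F) \<longleftrightarrow> (\<exists>f\<in>F. x \<in> dom f)" for x
  proof
    assume "x \<in> dom (join F)" thus "\<exists>f\<in>F. x \<in> dom f"
      using join_none by fastforce
  next
    assume h: "\<exists>f\<in>F. x \<in> dom f"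
    obtain g where "g \<in> F" "x \<in> dom g" "join F x = g x"
      using join_some[OF h] by blast
    thus "x \<in> dom (join F)" unfolding dom_def by simp
  qed
  thus ?thesis by (intro set_eqI) (simp only: UN_iff)
qed

lemma join_eq: assumes "compatible F" "f \<in> F" "x \<in> dom f" shows "join F x = f x"
proof -
  have h: "\<exists>f\<in>F. x \<in> dom f" using assms by blast
  obtain g where "g \<in> F" "x \<in> dom g" "join F x = g x"
    using join_some[OF h] by blast
  thus ?thesis using assms unfolding compatible_def by (metis IntI)
qed

lemma join_le: "compatible F \<Longrightarrow> f \<in> F \<Longrightarrow> f \<subseteq>\<^sub>m join F"
  unfolding map_le_def using join_eq by metis

lemma join_val: assumes "join F x = Some v" shows "\<exists>f\<in>F. f x = Some v"
proof -
  have h: "\<exists>f\<in>F. x \<in> dom f" using assms join_none by fastforce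
  obtain g where "g \<in> F" "x \<in> dom g" "join F x = g x"
    using join_some[OF h] by blast
  thus ?thesis using assms by metis
qed

lemma join_single: "join {f} = f"
proof
  fix x
  have c: "compatible {f}" unfolding compatible_def by auto
  show "join {f} x = f x"
  proof (cases "x \<in> dom f")
    case True thus ?thesis using join_eq[OF c] by blast
  next
    case False
    hence "x \<notin> dom (join {f})" by (simp add: dom_join)
    thus ?thesis using False by (simp add: domIff)
  qed
qed

lemma in_Ext: "f \<in> T \<Longrightarrow> f \<in> Ext T"
  unfolding Ext_def
  by (rule CollectI, rule exI[of _ "{f}"]) (auto simp: join_single compatible_def)

lemma map_le_eq: "f \<subseteq>\<^sub>m g \<Longrightarrow> dom f = dom g \<Longrightarrow> f = g"
  by (metis map_le_antisym map_le_def)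

definition lowerP :: "'e set \<Rightarrow> 'e rel \<Rightarrow> 'e rel \<Rightarrow> ('e \<rightharpoonup> 'v) \<Rightarrow> bool" where
  "lowerP E R R' f \<longleftrightarrow> (\<forall>x\<in>dom f. down E R x \<subseteq> dom f \<or> down E R' x \<subseteq> dom f)"

definition valsP :: "'e set \<Rightarrow> ('e \<Rightarrow> 'v set) \<Rightarrow> ('e \<rightharpoonup> 'v) \<Rightarrow> bool" where
  "valsP E I f \<longleftrightarrow> dom f \<subseteq> E \<and> (\<forall>x\<in>dom f. the (f x) \<in> I x)"

lemma down_trans: "causal_order E R \<Longrightarrow> x \<in> down E R y \<Longrightarrow> down E R x \<subseteq> down E R y"
  unfolding causal_order_def down_def trans_def by blast

lemma down_refl: "causal_order E R \<Longrightarrow> x \<in> E \<Longrightarrow> x \<in> down E R x"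
  unfolding causal_order_def down_def refl_on_def by blast

lemma Hist_lower1: assumes co: "causal_order E R" and f: "f \<in> Hist E R I" shows "lowerP E R R' f"
proof -
  obtain y where d: "dom f = down E R y" using f unfolding Hist_def by blast
  have "\<forall>x\<in>dom f. down E R x \<subseteq> dom f"
  proof
    fix x assume "x \<in> dom f"
    hence "x \<in> down E R y" using d by simp
    thus "down E R x \<subseteq> dom f" using down_trans[OF co] d by simp
  qed
  thus ?thesis by (simp add: lowerP_def)
qed

lemma Hist_lower2: assumes co: "causal_order E R'" and f: "f \<in> Hist E R' I" shows "lowerP E R R' f"
proof -
  obtain y where d: "dom f = down E R' y" using f unfolding Hist_def by blast
  have "\<forall>x\<in>dom f. down E R' x \<subseteq> dom f"
  proof
    fix x assume "x \<in> dom f"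
    hence "x \<in> down E R' y" using d by simp
    thus "down E R' x \<subseteq> dom f" using down_trans[OF co] d by simp
  qed
  thus ?thesis by (simp add: lowerP_def)
qed

lemma Hist_vals: "f \<in> Hist E R I \<Longrightarrow> valsP E I f"
  unfolding Hist_def valsP_def down_def by auto

lemma Ext_lower: assumes T: "\<And>f. f \<in> T \<Longrightarrow> lowerP E R R' f" and g: "g \<in> Ext T"
  shows "lowerP E R R' g"
proof -
  obtain F where F: "g = join F" "F \<subseteq> T" using g unfolding Ext_def by blast
  have "down E R x \<subseteq> dom g \<or> down E R' x \<subseteq> dom g" if x: "x \<in> dom g" for x
  proof -
    obtain f where f: "f \<in> F" "x \<in> dom f" using x F(1) dom_join by (metis UN_iff)
    have sub: "dom f \<subseteq> dom g" using F(1) f(1) dom_join by (metis UN_upper)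
    have "lowerP E R R' f" using T F(2) f(1) by (meson subsetD)
    hence "down E R x \<subseteq> dom f \<or> down E R' x \<subseteq> dom f" using f(2) unfolding lowerP_def by simp
    thus ?thesis using sub by (meson order_trans)
  qed
  thus ?thesis unfolding lowerP_def by simp
qed

lemma Ext_vals: assumes T: "\<And>f. f \<in> T \<Longrightarrow> valsP E I f" and g: "g \<in> Ext T"
  shows "valsP E I g"
proof -
  obtain F where F: "g = join F" "F \<subseteq> T" using g unfolding Ext_def by blast
  have "x \<in> E \<and> the (g x) \<in> I x" if x: "x \<in> dom g" for x
  proof -
    obtain v where v: "g x = Some v" using x by auto
    obtain f where f: "f \<in> F" "f x = Some v" using join_val v F(1) by metis
    have "valsP E I f" using T F(2) f(1) by (meson subsetD)
    moreover have "x \<in> dom f" using f(2) by (simp add: domIff)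
    ultimately have "x \<in> E" "the (f x) \<in> I x" unfolding valsP_def by blast+
    thus ?thesis using f(2) v by simp
  qed
  thus ?thesis unfolding valsP_def by auto
qed

lemma Prime_sub: "Prime W \<subseteq> W" unfolding Prime_def by auto


theorem theorem3:
  fixes E :: "'e set" and R R' :: "'e rel" and I :: "'e \<Rightarrow> 'v set"
  assumes "finite E"
    and "causal_order E R" and "causal_order E R'"
    and "\<forall>w\<in>E. I w \<noteq> {} \<and> finite (I w)"
  shows "tight (meet (Hist E R I) (Hist E R' I)) \<longleftrightarrow>
         (\<forall>w\<in>E. down E R w \<subseteq> down E R' w \<or> down E R' w \<subseteq> down E R w)"
proof -
  note coR = assms(2) and coR' = assms(3)
  define W where "W = Ext (Hist E R I) \<union> Ext (Hist E R' I)"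
  define M where "M = Prime W"
  have meq: "meet (Hist E R I) (Hist E R' I) = M" unfolding M_def W_def meet_def by simp
  have Wlow: "lowerP E R R' f" if "f \<in> W" for f
  proof (cases "f \<in> Ext (Hist E R I)")
    case True show ?thesis by (rule Ext_lower[OF Hist_lower1[OF coR] True])
  next
    case False
    hence "f \<in> Ext (Hist E R' I)" using that unfolding W_def by simp
    from Ext_lower[OF Hist_lower2[OF coR'] this] show ?thesis .
  qed
  have Wval: "valsP E I f" if "f \<in> W" for f
  proof (cases "f \<in> Ext (Hist E R I)")
    case True show ?thesis by (rule Ext_vals[OF Hist_vals True])
  next
    case False
    hence "f \<in> Ext (Hist E R' I)" using that unfolding W_def by simp
    from Ext_vals[OF Hist_vals this] show ?thesis .
  qed
  have Mlow: "lowerP E R R' f" if "f \<in> M" for f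
    using that Wlow Prime_sub unfolding M_def by (meson subsetD)
  have Mval: "valsP E I f" if "f \<in> M" for f
    using that Wval Prime_sub unfolding M_def by (meson subsetD)
  have EMlow: "lowerP E R R' f" if "f \<in> Ext M" for f
    using Ext_lower[OF Mlow that] .
  have EMval: "valsP E I f" if "f \<in> Ext M" for f
    using Ext_vals[OF Mval that] .
  have key: "h \<in> M \<and> w \<in> tips M h"
    if hw: "w \<in> dom h" and hW: "h \<in> W"
      and mn: "\<And>f::'e \<rightharpoonup> 'v. lowerP E R R' f \<Longrightarrow> w \<in> dom f \<Longrightarrow> dom f \<subseteq> dom h \<Longrightarrow> dom f = dom h"
    for h w
  proof
    show "h \<in> M" unfolding M_def Prime_def
    proof (intro CollectI conjI allI impI)
      show "h \<in> W" by fact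
      fix F assume F: "F \<subseteq> W \<and> compatible F \<and> h = join F"
      hence F1: "F \<subseteq> W" and F2: "compatible F" and F3: "h = join F" by simp_all
      have "w \<in> \<Union>(dom ` F)" using hw unfolding F3 dom_join .
      then obtain f where f: "f \<in> F" "w \<in> dom f" by (rule UN_E)
      have le: "f \<subseteq>\<^sub>m h" unfolding F3 by (rule join_le[OF F2 f(1)])
      have sub: "dom f \<subseteq> dom h" by (rule map_le_implies_dom_le[OF le])
      have "f \<in> W" using F1 f(1) by (rule subsetD)
      hence low: "lowerP E R R' f" by (rule Wlow)
      have "dom f = dom h" by (rule mn[OF low f(2) sub])
      hence "f = h" by (rule map_le_eq[OF le])
      thus "h \<in> F" using f by simp
    qed
    show "w \<in> tips M h" unfolding tips_def
    proof
      show "w \<in> dom h" by fact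
      show "w \<notin> \<Union> {dom k |k. k \<in> Ext M \<and> k \<subseteq>\<^sub>m h \<and> k \<noteq> h}"
      proof
        assume "w \<in> \<Union> {dom k |k. k \<in> Ext M \<and> k \<subseteq>\<^sub>m h \<and> k \<noteq> h}"
        then obtain k where k: "k \<in> Ext M" "k \<subseteq>\<^sub>m h" "k \<noteq> h" "w \<in> dom k" by auto
        have "dom k = dom h" using mn[OF EMlow[OF k(1)] k(4) map_le_implies_dom_le[OF k(2)]] .
        hence "k = h" by (rule map_le_eq[OF k(2)])
        thus False using k(3) by simp
      qed
    qed
  qed
  show ?thesis
  proof
    assume tt: "tight (meet (Hist E R I) (Hist E R' I))"
    show "\<forall>w\<in>E. down E R w \<subseteq> down E R' w \<or> down E R' w \<subseteq> down E R w"
    proof (rule ccontr)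
      assume "\<not> ?thesis"
      then obtain w where wE: "w \<in> E" and nAB: "\<not> down E R w \<subseteq> down E R' w"
        and nBA: "\<not> down E R' w \<subseteq> down E R w" by blast
      define A where "A = down E R w"
      define B where "B = down E R' w"
      have AE: "A \<subseteq> E" "B \<subseteq> E" unfolding A_def B_def down_def by auto
      have wA: "w \<in> A" "w \<in> B" unfolding A_def B_def using down_refl[OF coR wE] down_refl[OF coR' wE] by auto
      define c where "c x = (SOME v. v \<in> I x)" for x
      have cI: "c x \<in> I x" if "x \<in> E" for x
        unfolding c_def using assms(4) that by (simp add: some_in_eq)
      define k where "k = (\<lambda>x. if x \<in> A \<union> B then Some (c x) else None)"
      define hA where "hA = k |` A"
      define hB where "hB = k |` B"
      have dk: "dom k = A \<union> B" unfolding k_def by (auto split: if_splits)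
      have dA: "dom hA = A" unfolding hA_def using dk by auto
      have dB: "dom hB = B" unfolding hB_def using dk by auto
      have hAk: "hA x = k x" if "x \<in> A" for x unfolding hA_def using that by simp
      have hBk: "hB x = k x" if "x \<in> B" for x unfolding hB_def using that by simp
      have vA: "\<forall>x\<in>dom hA. the (hA x) \<in> I x" using dA hAk AE cI unfolding k_def by auto
      have vB: "\<forall>x\<in>dom hB. the (hB x) \<in> I x" using dB hBk AE cI unfolding k_def by auto
      have "hA \<in> Hist E R I" unfolding Hist_def using wE dA vA unfolding A_def by blast
      hence hAW: "hA \<in> W" unfolding W_def using in_Ext by blast
      have "hB \<in> Hist E R' I" unfolding Hist_def using wE dB vB unfolding B_def by blast
      hence hBW: "hB \<in> W" unfolding W_def using in_Ext by blast
      have kA: "hA \<in> M \<and> w \<in> tips M hA"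
      proof (rule key)
        show "w \<in> dom hA" using dA wA by simp
        show "hA \<in> W" by fact
        fix f assume "lowerP E R R' f" "w \<in> dom f" "dom f \<subseteq> dom hA"
        thus "dom f = dom hA" using nBA dA unfolding lowerP_def A_def B_def by blast
      qed
      have kB: "hB \<in> M \<and> w \<in> tips M hB"
      proof (rule key)
        show "w \<in> dom hB" using dB wA by simp
        show "hB \<in> W" by fact
        fix f assume "lowerP E R R' f" "w \<in> dom f" "dom f \<subseteq> dom hB"
        thus "dom f = dom hB" using nAB dB unfolding lowerP_def A_def B_def by blast
      qed
      have comp: "compatible {hA, hB}" unfolding compatible_def using dA dB hAk hBk by auto
      have jk: "join {hA, hB} = k"
      proof
        fix x
        show "join {hA, hB} x = k x"
        proof (cases "x \<in> A")
          case True thus ?thesis using join_eq[OF comp, of hA x] dA hAk by simp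
        next
          case nA: False
          show ?thesis
          proof (cases "x \<in> B")
            case True thus ?thesis using join_eq[OF comp, of hB x] dB hBk by simp
          next
            case False
            hence "x \<notin> dom (join {hA, hB})" using nA dA dB by (simp add: dom_join)
            moreover have "x \<notin> dom k" using dk nA False by simp
            ultimately show ?thesis by (simp add: domIff)
          qed
        qed
      qed
      have kM: "k \<in> Ext M" unfolding Ext_def
        by (rule CollectI, rule exI[of _ "{hA, hB}"]) (use comp jk kA kB in auto)
      have wk: "w \<in> dom k" using dk wA by simp
      have leA: "hA \<subseteq>\<^sub>m k" unfolding map_le_def using dA hAk by simp
      have leB: "hB \<subseteq>\<^sub>m k" unfolding map_le_def using dB hBk by simp
      have ne: "hA \<noteq> hB" using dA dB nAB unfolding A_def B_def by auto
      from tt[unfolded meq tight_def] kM wk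
      have "\<exists>!h. h \<in> M \<and> h \<subseteq>\<^sub>m k \<and> w \<in> tips M h" by blast
      thus False using kA kB leA leB ne by blast
    qed
  next
    assume cmp: "\<forall>w\<in>E. down E R w \<subseteq> down E R' w \<or> down E R' w \<subseteq> down E R w"
    show "tight (meet (Hist E R I) (Hist E R' I))"
      unfolding meq tight_def
    proof (intro ballI)
      fix k w assume kM: "k \<in> Ext M" and wk: "w \<in> dom k"
      have wE: "w \<in> E" using EMval[OF kM] wk unfolding valsP_def by blast
      define S where "S = (if down E R w \<subseteq> down E R' w then down E R w else down E R' w)"
      have Smin: "S \<subseteq> dom f" if "lowerP E R R' f" "w \<in> dom f" for f :: "'e \<rightharpoonup> 'v"
      proof -
        have d: "down E R w \<subseteq> dom f \<or> down E R' w \<subseteq> dom f"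
          using that unfolding lowerP_def by blast
        have c: "down E R w \<subseteq> down E R' w \<or> down E R' w \<subseteq> down E R w" using cmp wE by blast
        show ?thesis
        proof (cases "down E R w \<subseteq> down E R' w")
          case True
          hence "S = down E R w" unfolding S_def by simp
          thus ?thesis using d True by (meson order_trans)
        next
          case False
          hence "S = down E R' w" unfolding S_def by simp
          thus ?thesis using d c False by (meson order_trans)
        qed
      qed
      have Sk: "S \<subseteq> dom k" using Smin[OF EMlow[OF kM] wk] .
      have wS: "w \<in> S" unfolding S_def using down_refl[OF coR wE] down_refl[OF coR' wE] by auto
      have SE: "\<exists>x\<in>E. S = down E R x \<or> S = down E R' x" unfolding S_def using wE by auto
      define h where "h = k |` S"
      have dh: "dom h = S" unfolding h_def using Sk by auto
      have hk: "h x = k x" if "x \<in> S" for x unfolding h_def using that by simp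
      have vh: "\<forall>x\<in>dom h. the (h x) \<in> I x"
      proof
        fix x assume x: "x \<in> dom h"
        hence "x \<in> S" using dh by simp
        hence "h x = k x" "x \<in> dom k" using hk Sk by auto
        thus "the (h x) \<in> I x" using EMval[OF kM] unfolding valsP_def by simp
      qed
      have "h \<in> Hist E R I \<or> h \<in> Hist E R' I" unfolding Hist_def using SE dh vh by blast
      hence hW: "h \<in> W" unfolding W_def using in_Ext by blast
      have kh: "h \<in> M \<and> w \<in> tips M h"
      proof (rule key)
        show "w \<in> dom h" using dh wS by simp
        show "h \<in> W" by fact
        fix f :: "'e \<rightharpoonup> 'v" assume a: "lowerP E R R' f" "w \<in> dom f" "dom f \<subseteq> dom h"
        have "S \<subseteq> dom f" by (rule Smin[OF a(1) a(2)])
        thus "dom f = dom h" using a(3) dh by simp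
      qed
      have lek: "h \<subseteq>\<^sub>m k" unfolding map_le_def using dh hk by simp
      show "\<exists>!h. h \<in> M \<and> h \<subseteq>\<^sub>m k \<and> w \<in> tips M h"
      proof (rule ex1I[of _ h])
        show "h \<in> M \<and> h \<subseteq>\<^sub>m k \<and> w \<in> tips M h" using kh lek by blast
        fix h2 assume h2: "h2 \<in> M \<and> h2 \<subseteq>\<^sub>m k \<and> w \<in> tips M h2"
        have w2: "w \<in> dom h2" using h2 unfolding tips_def by blast
        have S2: "S \<subseteq> dom h2" using Smin[OF Mlow w2] h2 by blast
        have le2: "h \<subseteq>\<^sub>m h2"
          unfolding map_le_def
        proof
          fix x assume "x \<in> dom h"
          hence "x \<in> S" "x \<in> dom h2" using dh S2 by auto
          thus "h x = h2 x" using hk h2 unfolding map_le_def by auto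
        qed
        have "dom h2 = S"
        proof (rule ccontr)
          assume "dom h2 \<noteq> S"
          hence "h \<noteq> h2" using dh by auto
          moreover have "h \<in> Ext M" using in_Ext kh by blast
          ultimately have "w \<in> \<Union> {dom k |k. k \<in> Ext M \<and> k \<subseteq>\<^sub>m h2 \<and> k \<noteq> h2}"
            using le2 dh wS by blast
          thus False using h2 unfolding tips_def by blast
        qed
        thus "h2 = h" using map_le_eq[OF le2] dh by simp
      qed
    qed
  qed
qed

end
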